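(* Let $(\mu,\nu)\in\mathcal{P}(\mathbb{T})\times\mathcal{P}(\mathbb{T})$ be $\rhd_c$-infinitely divisible. - (1) If $\int_{\mathbb{T}}\zeta\,d\mu(\zeta)=0$, then $\mu=\omega$. - (2) If $\int_{\mathbb{T}}\zeta\,d\nu(\zeta)=0$, then $\nu=\omega$.
   Context: $\mathbb{T}$ is the unit circle, $\mathbb{D}$ the open unit disc, $\mathcal{P}(\mathbb{T})$ the Borel probability measures on $\mathbb{T}$, and $\omega$ the normalized Haar measure on $\mathbb{T}$. For $\mu\in\mathcal{P}(\mathbb{T})$ let $\psi_\mu(z)=\int\frac{z\zeta}{1-z\zeta}d\mu(\zeta)$ and $\eta_\mu=\psi_\mu/(1+\psi_\mu)$ on $\mathbb{D}$; $\eta_\mu$ determines $\mu$. The multiplicative conditionally monotone convolution is $(\mu_1,\nu_1)\rhd_c(\mu_2,\nu_2)=(\mu,\nu)$ with $\eta_\nu=\eta_{\nu_1}\circ\eta_{\nu_2}$ and $\eta_\mu(z)=\eta_{\mu_2}(z)\,h_{\mu_1}(\eta_{\nu_2}(z))$, where $h_{\mu_1}(w)=\eta_{\mu_1}(w)/w$ and $h_{\mu_1}(0)=\eta_{\mu_1}'(0)$. $(\mu,\nu)$ is $\rhd_c$-infinitely divisible if for every integer $n\ge2$ there is $(\mu_n,\nu_n)\in\mathcal{P}(\mathbb{T})^2$ with $(\mu,\nu)=(\mu_n,\nu_n)^{\rhd_c n}$, the $n$-fold convolution power. *)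

theory Defs
  imports "HOL-Probability.Probability"
begin

text \<open>Borel probability measures on the unit circle T, realised as probability
  measures on the Borel sets of the complex plane that are concentrated on T.\<close>
definition circle_prob :: "complex measure \<Rightarrow> bool" where
  "circle_prob M \<longleftrightarrow> prob_space M \<and> sets M = sets (borel :: complex measure)
      \<and> emeasure M (sphere 0 1) = 1"

definition haar_circle :: "complex measure" where
  "haar_circle = distr (uniform_measure lborel {0..(1::real)}) borel (\<lambda>t. cis (2 * pi * t))"

definition psi_fun :: "complex measure \<Rightarrow> complex \<Rightarrow> complex" where
  "psi_fun M z = integral\<^sup>L M (\<lambda>\<zeta>. z * \<zeta> / (1 - z * \<zeta>))"

definition eta_fun :: "complex measure \<Rightarrow> complex \<Rightarrow> complex" where
  "eta_fun M z = psi_fun M z / (1 + psi_fun M z)"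

definition h_fun :: "complex measure \<Rightarrow> complex \<Rightarrow> complex" where
  "h_fun M w = (if w = 0 then deriv (eta_fun M) 0 else eta_fun M w / w)"

text \<open>(mu1,nu1) |>c (mu2,nu2) = (mu,nu), as a relation (functional since eta determines the measure).\<close>
definition cm_conv :: "complex measure \<times> complex measure \<Rightarrow> complex measure \<times> complex measure
    \<Rightarrow> complex measure \<times> complex measure \<Rightarrow> bool" where
  "cm_conv P1 P2 P \<longleftrightarrow>
     circle_prob (fst P1) \<and> circle_prob (snd P1) \<and> circle_prob (fst P2) \<and> circle_prob (snd P2)
     \<and> circle_prob (fst P) \<and> circle_prob (snd P)
     \<and> (\<forall>z\<in>ball 0 1. eta_fun (snd P) z = eta_fun (snd P1) (eta_fun (snd P2) z)
                    \<and> eta_fun (fst P) z = eta_fun (fst P2) z * h_fun (fst P1) (eta_fun (snd P2) z))"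

inductive cm_pow :: "complex measure \<times> complex measure \<Rightarrow> nat \<Rightarrow> complex measure \<times> complex measure \<Rightarrow> bool"
  for P where
  one: "circle_prob (fst P) \<Longrightarrow> circle_prob (snd P) \<Longrightarrow> cm_pow P 1 P"
| step: "cm_pow P k Q \<Longrightarrow> cm_conv Q P R \<Longrightarrow> cm_pow P (Suc k) R"

definition cm_inf_div :: "complex measure \<Rightarrow> complex measure \<Rightarrow> bool" where
  "cm_inf_div \<mu> \<nu> \<longleftrightarrow> circle_prob \<mu> \<and> circle_prob \<nu> \<and>
     (\<forall>n::nat. n \<ge> 2 \<longrightarrow> (\<exists>Pn. circle_prob (fst Pn) \<and> circle_prob (snd Pn) \<and> cm_pow Pn n (\<mu>, \<nu>)))"

end

theory Submission
  imports Defs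
begin


definition mom :: "complex measure \<Rightarrow> nat \<Rightarrow> complex" where
  "mom M j = integral\<^sup>L M (\<lambda>\<zeta>. \<zeta> ^ j)"

lemma circ_prob: "circle_prob M \<Longrightarrow> prob_space M"
  by (simp add: circle_prob_def)

lemma circ_sets: "circle_prob M \<Longrightarrow> sets M = sets borel"
  by (simp add: circle_prob_def)

lemma circ_AE: assumes "circle_prob M" shows "AE \<zeta> in M. cmod \<zeta> = 1"
proof -
  interpret prob_space M using assms by (simp add: circle_prob_def)
  have "prob (sphere 0 1) = 1" using assms by (simp add: circle_prob_def measure_def)
  then have "AE x in M. x \<in> sphere 0 1" by (rule AE_prob_1)
  then show ?thesis by eventually_elim (simp add: dist_norm)
qed

lemma circ_meas: assumes "circle_prob M" "f \<in> borel_measurable borel" shows "f \<in> borel_measurable M"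
  using assms by (simp add: circ_sets cong: measurable_cong_sets)

lemma circ_integrable:
  fixes f :: "complex \<Rightarrow> 'b::{banach,second_countable_topology}"
  assumes "circle_prob M" "f \<in> borel_measurable borel" "AE \<zeta> in M. norm (f \<zeta>) \<le> B"
  shows "integrable M f"
proof -
  interpret prob_space M using assms by (simp add: circle_prob_def)
  have "integrable M (\<lambda>_. B)" by simp
  moreover have "AE \<zeta> in M. norm (f \<zeta>) \<le> norm B" using assms(3) by eventually_elim auto
  ultimately show ?thesis by (intro Bochner_Integration.integrable_bound[OF _ circ_meas[OF assms(1,2)]])
qed

lemma circ_norm_int:
  fixes f :: "complex \<Rightarrow> 'b::{banach,second_countable_topology}"
  assumes "circle_prob M" "integrable M f" "AE \<zeta> in M. norm (f \<zeta>) \<le> B"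
  shows "norm (integral\<^sup>L M f) \<le> B"
proof -
  interpret prob_space M using assms by (simp add: circle_prob_def)
  have "norm (integral\<^sup>L M f) \<le> integral\<^sup>L M (\<lambda>x. norm (f x))" by (rule integral_norm_bound)
  also have "\<dots> \<le> integral\<^sup>L M (\<lambda>_. B)"
    using assms by (intro integral_mono_AE) auto
  also have "\<dots> = B" by (simp add: prob_space)
  finally show ?thesis .
qed

lemma circ_int_pow: "circle_prob M \<Longrightarrow> integrable M (\<lambda>\<zeta>::complex. \<zeta> ^ j)"
  by (rule circ_integrable[where B=1]) (auto dest: circ_AE simp: norm_power)

lemma mom_bound: "circle_prob M \<Longrightarrow> cmod (mom M j) \<le> 1"
  unfolding mom_def
  by (rule circ_norm_int[OF _ circ_int_pow]) (auto dest: circ_AE simp: norm_power)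

lemma geom_rem:
  fixes w :: complex assumes "w \<noteq> 1"
  shows "w / (1 - w) - (\<Sum>j=1..k. w ^ j) = w ^ (k+1) / (1 - w)"
proof (induction k)
  case 0 then show ?case by simp
next
  case (Suc k)
  have "w / (1 - w) - (\<Sum>j=1..Suc k. w ^ j) = w ^ (k+1) / (1 - w) - w^(k+1)"
    using Suc by (simp add: algebra_simps)
  also have "\<dots> = w ^ (Suc k + 1) / (1 - w)" using assms
    by (simp add: field_simps)
  finally show ?case .
qed

lemma psi_expand:
  assumes M: "circle_prob M" and z: "cmod z \<le> 1/2"
  shows "cmod (psi_fun M z - (\<Sum>j=1..k. mom M j * z ^ j)) \<le> 2 * cmod z ^ (k+1)"
proof -
  have meas: "(\<lambda>\<zeta>. z * \<zeta> / (1 - z * \<zeta>)) \<in> borel_measurable borel" by measurable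
  have AEb: "AE \<zeta> in M. cmod (1 - z * \<zeta>) \<ge> 1/2 \<and> cmod \<zeta> = 1"
    using circ_AE[OF M]
  proof eventually_elim
    case (elim \<zeta>)
    have "cmod (z*\<zeta>) \<le> 1/2" using elim z by (simp add: norm_mult)
    moreover have "1 - cmod (z*\<zeta>) \<le> cmod (1 - z*\<zeta>)"
      by (metis norm_one norm_triangle_ineq2)
    ultimately show ?case using elim by simp
  qed
  have int1: "integrable M (\<lambda>\<zeta>. z * \<zeta> / (1 - z * \<zeta>))"
    apply (rule circ_integrable[OF M meas, where B=2])
    using AEb
  proof eventually_elim
    case (elim \<zeta>)
    then have "cmod (z * \<zeta> / (1 - z * \<zeta>)) = cmod z / cmod (1 - z*\<zeta>)" by (simp add: norm_divide norm_mult)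
    also have "\<dots> \<le> (1/2) / (1/2)" using elim z
      by (intro frac_le) auto
    finally show ?case by simp
  qed
  have intj: "\<And>j. integrable M (\<lambda>\<zeta>. mom M j * z ^ j * \<zeta> ^ j)"
    using circ_int_pow[OF M] by simp
  have "psi_fun M z - (\<Sum>j=1..k. mom M j * z ^ j)
      = integral\<^sup>L M (\<lambda>\<zeta>. z * \<zeta> / (1 - z * \<zeta>) - (\<Sum>j=1..k. (z*\<zeta>) ^ j))"
    using int1 circ_int_pow[OF M]
    by (simp add: psi_fun_def mom_def integral_diff integral_sum power_mult_distrib mult.commute)
  also have "\<dots> = integral\<^sup>L M (\<lambda>\<zeta>. (z * \<zeta>) ^ (k+1) / (1 - z * \<zeta>))"
  proof (rule integral_cong_AE)
    show "(\<lambda>\<zeta>. z * \<zeta> / (1 - z * \<zeta>) - (\<Sum>j=1..k. (z*\<zeta>) ^ j)) \<in> borel_measurable M"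
      by (rule circ_meas[OF M]) measurable
    show "(\<lambda>\<zeta>. (z * \<zeta>) ^ (k+1) / (1 - z * \<zeta>)) \<in> borel_measurable M"
      by (rule circ_meas[OF M]) measurable
    show "AE \<zeta> in M. z * \<zeta> / (1 - z * \<zeta>) - (\<Sum>j=1..k. (z*\<zeta>) ^ j) = (z * \<zeta>) ^ (k+1) / (1 - z * \<zeta>)"
      using AEb by eventually_elim (rule geom_rem, force)
  qed
  also have "cmod \<dots> \<le> 2 * cmod z ^ (k+1)"
  proof (rule circ_norm_int[OF M])
    show "integrable M (\<lambda>\<zeta>. (z * \<zeta>) ^ (k+1) / (1 - z * \<zeta>))"
      apply (rule circ_integrable[OF M, where B=2])
       apply measurable
      using AEb
    proof eventually_elim
      case (elim \<zeta>)
      have "cmod ((z * \<zeta>) ^ (k+1) / (1 - z * \<zeta>)) = cmod z ^ (k+1) / cmod (1 - z*\<zeta>)"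
        using elim by (simp add: norm_divide norm_mult norm_power)
      also have "\<dots> \<le> 1 / (1/2)" using elim z power_le_one[of "cmod z" "k+1"]
        by (intro frac_le) auto
      finally show ?case by simp
    qed
    show "AE \<zeta> in M. cmod ((z * \<zeta>) ^ (k+1) / (1 - z * \<zeta>)) \<le> 2 * cmod z ^ (k+1)"
      using AEb
    proof eventually_elim
      case (elim \<zeta>)
      have "cmod ((z * \<zeta>) ^ (k+1) / (1 - z * \<zeta>)) = cmod z ^ (k+1) / cmod (1 - z*\<zeta>)"
        using elim by (simp add: norm_divide norm_mult norm_power)
      also have "\<dots> \<le> cmod z ^ (k+1) / (1/2)" using elim z
        by (intro divide_left_mono) auto
      finally show ?case by simp
    qed
  qed
  finally show ?thesis .
qed



definition bigO :: "(complex \<Rightarrow> complex) \<Rightarrow> nat \<Rightarrow> bool" where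
  "bigO f N \<longleftrightarrow> (\<exists>D r. 0 \<le> D \<and> 0 < r \<and> (\<forall>z. cmod z < r \<longrightarrow> cmod (f z) \<le> D * cmod z ^ N))"

lemma eta_bounds:
  assumes M: "circle_prob M" and z: "cmod z \<le> 1/4"
  shows "cmod (psi_fun M z) \<le> 2 * cmod z"
    and "cmod (1 + psi_fun M z) \<ge> 1/2"
    and "cmod (eta_fun M z) \<le> 4 * cmod z"
    and "cmod (eta_fun M z - mom M 1 * z) \<le> 10 * cmod z ^ 2"
    and "cmod (psi_fun M z) \<le> 2 * cmod (eta_fun M z)"
proof -
  have z2: "cmod z \<le> 1/2" using z by simp
  show a: "cmod (psi_fun M z) \<le> 2 * cmod z"
    using psi_expand[OF M z2, of 0] by simp
  have b: "cmod (psi_fun M z - mom M 1 * z) \<le> 2 * cmod z ^ 2"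
    using psi_expand[OF M z2, of 1] by (simp add: power2_eq_square)
  have ps: "cmod (psi_fun M z) \<le> 1/2" using a z by simp
  have "1 - cmod (psi_fun M z) \<le> cmod (1 + psi_fun M z)"
    by (metis norm_diff_ineq norm_one)
  then show c: "cmod (1 + psi_fun M z) \<ge> 1/2" using ps by simp
  then have nz: "1 + psi_fun M z \<noteq> 0" by auto
  have "cmod (eta_fun M z) = cmod (psi_fun M z) / cmod (1 + psi_fun M z)"
    by (simp add: eta_fun_def norm_divide)
  also have "\<dots> \<le> (2 * cmod z) / (1/2)" using a c by (intro frac_le) auto
  finally show "cmod (eta_fun M z) \<le> 4 * cmod z" by simp
  have "eta_fun M z - mom M 1 * z = ((psi_fun M z - mom M 1 * z) - mom M 1 * z * psi_fun M z) / (1 + psi_fun M z)"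
    using nz by (simp add: eta_fun_def field_simps)
  also have "cmod \<dots> \<le> (2 * cmod z ^ 2 + cmod z * (2 * cmod z)) / (1/2)"
  proof -
    have "cmod ((psi_fun M z - mom M 1 * z) - mom M 1 * z * psi_fun M z)
        \<le> cmod (psi_fun M z - mom M 1 * z) + cmod (mom M 1 * z * psi_fun M z)"
      by (rule norm_triangle_ineq4)
    also have "cmod (mom M 1 * z * psi_fun M z) \<le> cmod z * (2 * cmod z)"
    proof -
      have "cmod (mom M 1 * z * psi_fun M z) = cmod (mom M 1) * (cmod z * cmod (psi_fun M z))"
        by (simp add: norm_mult)
      also have "\<dots> \<le> 1 * (cmod z * (2 * cmod z))"
        using mom_bound[OF M, of 1] a by (intro mult_mono mult_left_mono) auto
      finally show ?thesis by simp
    qed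
    finally have "cmod ((psi_fun M z - mom M 1 * z) - mom M 1 * z * psi_fun M z)
        \<le> 2 * cmod z ^ 2 + cmod z * (2 * cmod z)" using b by linarith
    then show ?thesis using c unfolding norm_divide by (intro frac_le) auto
  qed
  finally have "cmod (eta_fun M z - mom M 1 * z) \<le> 8 * (cmod z * cmod z)"
    by (simp add: power2_eq_square)
  then show "cmod (eta_fun M z - mom M 1 * z) \<le> 10 * cmod z ^ 2"
    unfolding power2_eq_square using mult_nonneg_nonneg[OF norm_ge_zero norm_ge_zero, of z z] by linarith
  have "psi_fun M z = eta_fun M z * (1 + psi_fun M z)" using nz by (simp add: eta_fun_def)
  then have "cmod (psi_fun M z) = cmod (eta_fun M z) * cmod (1 + psi_fun M z)" by (metis norm_mult)
  also have "\<dots> \<le> cmod (eta_fun M z) * 2"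
  proof (intro mult_left_mono)
    show "cmod (1 + psi_fun M z) \<le> 2" using ps norm_triangle_ineq[of 1 "psi_fun M z"] by simp
  qed auto
  finally show "cmod (psi_fun M z) \<le> 2 * cmod (eta_fun M z)" by simp
qed

lemma psi_0: "psi_fun M 0 = 0" by (simp add: psi_fun_def)
lemma eta_0: "eta_fun M 0 = 0" by (simp add: eta_fun_def psi_0)

lemma eta_deriv:
  assumes M: "circle_prob M"
  shows "(eta_fun M has_field_derivative mom M 1) (at 0)"
proof -
  have "((\<lambda>y. eta_fun M y / y - mom M 1) \<longlongrightarrow> 0) (at 0)"
  proof (rule Lim_null_comparison)
    have bnd: "norm (eta_fun M y / y - mom M 1) \<le> 10 * cmod y" if y: "y \<noteq> 0" "cmod y < 1/4" for y
    proof -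
      have "eta_fun M y / y - mom M 1 = (eta_fun M y - mom M 1 * y) / y" using y by (simp add: field_simps)
      then have "norm (eta_fun M y / y - mom M 1) = cmod (eta_fun M y - mom M 1 * y) / cmod y"
        by (simp add: norm_divide)
      also have "\<dots> \<le> 10 * cmod y ^ 2 / cmod y" using y eta_bounds(4)[OF M, of y]
        by (intro divide_right_mono) auto
      also have "\<dots> = 10 * cmod y" using y by (simp add: power2_eq_square)
      finally show ?thesis .
    qed
    have ev: "\<forall>\<^sub>F y in at (0::complex). y \<noteq> 0 \<and> cmod y < 1/4"
      unfolding eventually_at by (rule exI[of _ "1/4"]) (auto simp: dist_norm)
    show "\<forall>\<^sub>F y in at 0. norm (eta_fun M y / y - mom M 1) \<le> 10 * cmod y"
      using ev by eventually_elim (use bnd in blast)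
    show "((\<lambda>y. 10 * cmod y) \<longlongrightarrow> 0) (at (0::complex))"
      by (auto intro!: tendsto_eq_intros)
  qed
  then have "((\<lambda>y. eta_fun M y / y) \<longlongrightarrow> mom M 1) (at 0)"
    by (simp add: Lim_null[symmetric])
  then show ?thesis
    by (simp add: has_field_derivative_iff eta_0)
qed

lemma h_0: "circle_prob M \<Longrightarrow> h_fun M 0 = mom M 1"
  by (simp add: h_fun_def DERIV_imp_deriv[OF eta_deriv])

lemma h_bound:
  assumes M: "circle_prob M" and w: "cmod w \<le> 1/4"
  shows "cmod (h_fun M w - mom M 1) \<le> 10 * cmod w" and "cmod (h_fun M w) \<le> 4"
proof -
  show a: "cmod (h_fun M w - mom M 1) \<le> 10 * cmod w"
  proof (cases "w = 0")
    case True then show ?thesis using h_0[OF M] by simp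
  next
    case False
    then have "h_fun M w - mom M 1 = (eta_fun M w - mom M 1 * w) / w" by (simp add: h_fun_def field_simps)
    then have "cmod (h_fun M w - mom M 1) = cmod (eta_fun M w - mom M 1 * w) / cmod w"
      by (simp add: norm_divide)
    also have "\<dots> \<le> 10 * cmod w ^ 2 / cmod w" using w eta_bounds(4)[OF M w]
      by (intro divide_right_mono) auto
    also have "\<dots> = 10 * cmod w" using False by (simp add: power2_eq_square)
    finally show ?thesis .
  qed
  have "cmod (h_fun M w) \<le> cmod (h_fun M w - mom M 1) + cmod (mom M 1)"
    by (metis diff_add_cancel norm_triangle_ineq)
  then show "cmod (h_fun M w) \<le> 4" using a w mom_bound[OF M, of 1] by linarith
qed

lemma coef_zero:
  fixes a C r :: real
  assumes "0 < r" "0 \<le> a" "\<And>t. 0 < t \<Longrightarrow> t < r \<Longrightarrow> a \<le> C * t"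
  shows "a = 0"
proof (rule ccontr)
  assume "a \<noteq> 0" then have a: "a > 0" using assms by simp
  have "0 < C * (r/2)" using assms(3)[of "r/2"] a assms(1) by auto
  then have C: "C > 0" using assms(1) by (simp add: zero_less_mult_iff)
  define t where "t = min (r/2) (a / (2*C))"
  have "0 < t" "t < r" using a C assms(1) by (auto simp: t_def)
  then have "a \<le> C * t" by (rule assms(3))
  also have "\<dots> \<le> C * (a/(2*C))" using C by (intro mult_left_mono) (auto simp: t_def)
  also have "\<dots> = a/2" using C by simp
  finally show False using a by simp
qed

lemma moments_zero:
  assumes M: "circle_prob M" and O: "\<And>N. bigO (psi_fun M) N"
  shows "k \<ge> 1 \<Longrightarrow> mom M k = 0"
proof (induction k rule: less_induct)
  case (less k)
  have sum: "(\<Sum>j=1..k. mom M j * z ^ j) = mom M k * z ^ k" for z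
  proof -
    have "{1..k} = insert k {1..<k}" using less.prems by auto
    then have "(\<Sum>j=1..k. mom M j * z ^ j) = mom M k * z ^ k + (\<Sum>j\<in>{1..<k}. mom M j * z ^ j)"
      by simp
    also have "(\<Sum>j\<in>{1..<k}. mom M j * z ^ j) = 0"
      using less.IH by (intro sum.neutral) auto
    finally show ?thesis by simp
  qed
  obtain D r where Dr: "0 \<le> D" "0 < r" "\<And>z. cmod z < r \<Longrightarrow> cmod (psi_fun M z) \<le> D * cmod z ^ (k+1)"
    using O[of "k+1"] unfolding bigO_def by blast
  have "cmod (mom M k) = 0"
  proof (rule coef_zero[of "min r (1/2)" _ "D + 2"])
    fix t :: real assume t: "0 < t" "t < min r (1/2)"
    let ?z = "complex_of_real t"
    have nz: "cmod ?z = t" using t by simp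
    have e1: "cmod (psi_fun M ?z - mom M k * ?z ^ k) \<le> 2 * t ^ (k+1)"
      using psi_expand[OF M, of ?z k] sum[of ?z] t nz by simp
    have e2: "cmod (psi_fun M ?z) \<le> D * t ^ (k+1)" using Dr(3)[of ?z] t nz by simp
    have "cmod (mom M k * ?z ^ k) \<le> cmod (psi_fun M ?z) + cmod (psi_fun M ?z - mom M k * ?z ^ k)"
      by (metis norm_triangle_sub norm_minus_commute)
    then have "cmod (mom M k) * t ^ k \<le> (D + 2) * t ^ (k+1)"
      using e1 e2 nz by (simp add: norm_mult norm_power algebra_simps)
    then have "cmod (mom M k) * t ^ k \<le> ((D + 2) * t) * t ^ k" by (simp add: algebra_simps)
    then show "cmod (mom M k) \<le> (D + 2) * t" using t by simp
  qed (use Dr in auto)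
  then show ?case by simp
qed



lemma lin_coef:
  assumes r: "0 < r" and b: "\<And>t. 0 < t \<Longrightarrow> t < r \<Longrightarrow> cmod (a * complex_of_real t) \<le> C * t ^ 2"
  shows "a = 0"
proof -
  have "cmod a = 0"
  proof (rule coef_zero[OF r norm_ge_zero])
    fix t :: real assume t: "0 < t" "t < r"
    have "cmod a * t \<le> (C * t) * t" using b[OF t] t by (simp add: norm_mult power2_eq_square algebra_simps)
    then show "cmod a \<le> C * t" using t by simp
  qed
  then show ?thesis by simp
qed

lemma conv_E:
  assumes "cm_conv Q P R"
  shows "circle_prob (fst Q)" "circle_prob (snd Q)" "circle_prob (fst P)" "circle_prob (snd P)"
    "circle_prob (fst R)" "circle_prob (snd R)"
    "\<And>z. cmod z < 1 \<Longrightarrow> eta_fun (snd R) z = eta_fun (snd Q) (eta_fun (snd P) z)"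
    "\<And>z. cmod z < 1 \<Longrightarrow> eta_fun (fst R) z = eta_fun (fst P) z * h_fun (fst Q) (eta_fun (snd P) z)"
  using assms by (auto simp: cm_conv_def)

lemma m1_snd:
  assumes C: "cm_conv Q P R"
  shows "mom (snd R) 1 = mom (snd Q) 1 * mom (snd P) 1"
proof -
  note E = conv_E[OF C]
  have "mom (snd R) 1 - mom (snd Q) 1 * mom (snd P) 1 = 0"
  proof (rule lin_coef[of "1/16" _ 180])
    fix t :: real assume t: "0 < t" "t < 1/16"
    define z where "z = complex_of_real t"
    have nz: "cmod z = t" using t by (simp add: z_def)
    define w where "w = eta_fun (snd P) z"
    have w4: "cmod w \<le> 4 * t" using eta_bounds(3)[OF E(4), of z] nz t by (simp add: w_def)
    have w: "cmod w \<le> 1/4" using w4 t by simp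
    have eq: "(mom (snd R) 1 - mom (snd Q) 1 * mom (snd P) 1) * z
       = (mom (snd R) 1 * z - eta_fun (snd R) z) + (eta_fun (snd Q) w - mom (snd Q) 1 * w)
         + mom (snd Q) 1 * (w - mom (snd P) 1 * z)"
      using E(7)[of z] nz t by (simp add: w_def algebra_simps)
    have n1: "cmod (mom (snd R) 1 * z - eta_fun (snd R) z) \<le> 10 * t^2"
      using eta_bounds(4)[OF E(6), of z] nz t by (simp add: norm_minus_commute)
    have n2: "cmod (eta_fun (snd Q) w - mom (snd Q) 1 * w) \<le> 10 * (4*t)^2"
      using eta_bounds(4)[OF E(2) w] w4 power_mono[OF w4 norm_ge_zero, of 2] by linarith
    have n3: "cmod (mom (snd Q) 1 * (w - mom (snd P) 1 * z)) \<le> 10 * t^2"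
    proof -
      have "cmod (mom (snd Q) 1 * (w - mom (snd P) 1 * z)) = cmod (mom (snd Q) 1) * cmod (w - mom (snd P) 1 * z)"
        by (simp add: norm_mult)
      also have "\<dots> \<le> 1 * (10 * t^2)"
        using mom_bound[OF E(2), of 1] eta_bounds(4)[OF E(4), of z] nz t
        by (intro mult_mono) (auto simp: w_def)
      finally show ?thesis by simp
    qed
    have "cmod ((mom (snd R) 1 - mom (snd Q) 1 * mom (snd P) 1) * z) \<le> 10 * t^2 + 10 * (4*t)^2 + 10 * t^2"
      unfolding eq using n1 n2 n3 norm_triangle_ineq
      by (smt (verit, best))
    then show "cmod ((mom (snd R) 1 - mom (snd Q) 1 * mom (snd P) 1) * complex_of_real t) \<le> 180 * t ^ 2"
      by (simp add: z_def power2_eq_square algebra_simps)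
  qed simp
  then show ?thesis by simp
qed

lemma m1_fst:
  assumes C: "cm_conv Q P R"
  shows "mom (fst R) 1 = mom (fst P) 1 * mom (fst Q) 1"
proof -
  note E = conv_E[OF C]
  have "mom (fst R) 1 - mom (fst P) 1 * mom (fst Q) 1 = 0"
  proof (rule lin_coef[of "1/16" _ 90])
    fix t :: real assume t: "0 < t" "t < 1/16"
    define z where "z = complex_of_real t"
    have nz: "cmod z = t" using t by (simp add: z_def)
    define w where "w = eta_fun (snd P) z"
    have w4: "cmod w \<le> 4 * t" using eta_bounds(3)[OF E(4), of z] nz t by (simp add: w_def)
    have w: "cmod w \<le> 1/4" using w4 t by simp
    have eq: "(mom (fst R) 1 - mom (fst P) 1 * mom (fst Q) 1) * z
       = (mom (fst R) 1 * z - eta_fun (fst R) z) + (eta_fun (fst P) z - mom (fst P) 1 * z) * h_fun (fst Q) w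
         + mom (fst P) 1 * z * (h_fun (fst Q) w - mom (fst Q) 1)"
      using E(8)[of z] nz t by (simp add: w_def algebra_simps)
    have n1: "cmod (mom (fst R) 1 * z - eta_fun (fst R) z) \<le> 10 * t^2"
      using eta_bounds(4)[OF E(5), of z] nz t by (simp add: norm_minus_commute)
    have n2: "cmod ((eta_fun (fst P) z - mom (fst P) 1 * z) * h_fun (fst Q) w) \<le> (10 * t^2) * 4"
      unfolding norm_mult using eta_bounds(4)[OF E(3), of z] h_bound(2)[OF E(1) w] nz t
      by (intro mult_mono) auto
    have n3: "cmod (mom (fst P) 1 * z * (h_fun (fst Q) w - mom (fst Q) 1)) \<le> 1 * t * (10 * (4 * t))"
      unfolding norm_mult using mom_bound[OF E(3), of 1] h_bound(1)[OF E(1) w] w4 nz t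
      by (intro mult_mono) auto
    have "cmod ((mom (fst R) 1 - mom (fst P) 1 * mom (fst Q) 1) * z) \<le> 10 * t^2 + (10 * t^2) * 4 + 1 * t * (10 * (4 * t))"
      unfolding eq using n1 n2 n3 norm_triangle_ineq
      by (smt (verit, best))
    then show "cmod ((mom (fst R) 1 - mom (fst P) 1 * mom (fst Q) 1) * complex_of_real t) \<le> 90 * t ^ 2"
      by (simp add: z_def power2_eq_square algebra_simps)
  qed simp
  then show ?thesis by simp
qed

lemma pow_m1:
  assumes "cm_pow P k Q"
  shows "circle_prob (fst Q) \<and> circle_prob (snd Q) \<and> mom (fst Q) 1 = mom (fst P) 1 ^ k
       \<and> mom (snd Q) 1 = mom (snd P) 1 ^ k \<and> k \<ge> 1"
  using assms
proof (induction rule: cm_pow.induct)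
  case one
  then show ?case by simp
next
  case (step k Q R)
  note E = conv_E[OF step.hyps(2)]
  show ?case using step.IH E(5,6) m1_fst[OF step.hyps(2)] m1_snd[OF step.hyps(2)]
    by (simp add: mult.commute)
qed

lemma bigO_mono: "bigO f a \<Longrightarrow> b \<le> a \<Longrightarrow> bigO f b"
  unfolding bigO_def
proof (elim exE conjE)
  fix D r assume D: "0 \<le> D" "0 < r" "\<forall>z. cmod z < r \<longrightarrow> cmod (f z) \<le> D * cmod z ^ a" and ba: "b \<le> a"
  show "\<exists>D r. 0 \<le> D \<and> 0 < r \<and> (\<forall>z. cmod z < r \<longrightarrow> cmod (f z) \<le> D * cmod z ^ b)"
  proof (intro exI conjI allI impI)
    fix z assume z: "cmod z < min r 1"
    have "cmod (f z) \<le> D * cmod z ^ a" using D z by auto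
    also have "\<dots> \<le> D * cmod z ^ b" using z ba D by (intro mult_left_mono power_decreasing) auto
    finally show "cmod (f z) \<le> D * cmod z ^ b" .
  qed (use D in auto)
qed

lemma pow_ord_snd:
  assumes "cm_pow P k Q" "mom (snd P) 1 = 0"
  shows "bigO (eta_fun (snd Q)) (k+1)"
  using assms
proof (induction rule: cm_pow.induct)
  case one
  show ?case unfolding bigO_def
  proof (rule exI[of _ 10], rule exI[of _ "1/4"], intro conjI allI impI)
    fix z :: complex assume "cmod z < 1/4"
    then show "cmod (eta_fun (snd P) z) \<le> 10 * cmod z ^ (1+1)"
      using eta_bounds(4)[OF one(2), of z] one.prems by (simp add: power2_eq_square)
  qed auto
next
  case (step k Q R)
  note E = conv_E[OF step.hyps(2)]
  obtain D r where D: "0 \<le> D" "0 < r" "\<And>z. cmod z < r \<Longrightarrow> cmod (eta_fun (snd Q) z) \<le> D * cmod z ^ (k+1)"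
    using step.IH step.prems unfolding bigO_def by blast
  show ?case unfolding bigO_def
  proof (rule exI[of _ "D * 10^(k+1)"], rule exI[of _ "min (1/4) (r/10)"], intro conjI allI impI)
    fix z :: complex assume z: "cmod z < min (1/4) (r/10)"
    define w where "w = eta_fun (snd P) z"
    have w: "cmod w \<le> 10 * cmod z ^ 2" using eta_bounds(4)[OF E(4), of z] z step.prems by (simp add: w_def)
    have "cmod z ^ 2 \<le> cmod z" using z by (simp add: power2_eq_square mult_left_le_one_le)
    then have wr: "cmod w < r" using w z by linarith
    have "eta_fun (snd R) z = eta_fun (snd Q) w" using E(7)[of z] z by (simp add: w_def)
    then have "cmod (eta_fun (snd R) z) \<le> D * cmod w ^ (k+1)" using D(3)[OF wr] by simp
    also have "\<dots> \<le> D * (10 * cmod z ^ 2) ^ (k+1)" using w D by (intro mult_left_mono power_mono) auto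
    also have "\<dots> = (D * 10^(k+1)) * cmod z ^ (2*(k+1))" by (simp only: power_mult_distrib power_mult mult.assoc)
    also have "\<dots> \<le> (D * 10^(k+1)) * cmod z ^ (Suc k + 1)"
      using z D by (intro mult_left_mono power_decreasing) auto
    finally show "cmod (eta_fun (snd R) z) \<le> (D * 10^(k+1)) * cmod z ^ (Suc k + 1)" .
  qed (use D in auto)
qed

lemma pow_ord_fst:
  assumes "cm_pow P k Q" "mom (fst P) 1 = 0"
  shows "bigO (eta_fun (fst Q)) (k+1)"
  using assms
proof (induction rule: cm_pow.induct)
  case one
  show ?case unfolding bigO_def
  proof (rule exI[of _ 10], rule exI[of _ "1/4"], intro conjI allI impI)
    fix z :: complex assume "cmod z < 1/4"
    then show "cmod (eta_fun (fst P) z) \<le> 10 * cmod z ^ (1+1)"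
      using eta_bounds(4)[OF one(1), of z] one.prems by (simp add: power2_eq_square)
  qed auto
next
  case (step k Q R)
  note E = conv_E[OF step.hyps(2)]
  have pm: "mom (fst Q) 1 = 0" "k \<ge> 1" using pow_m1[OF step.hyps(1)] step.prems by auto
  obtain D r where D: "0 \<le> D" "0 < r" "\<And>z. cmod z < r \<Longrightarrow> cmod (eta_fun (fst Q) z) \<le> D * cmod z ^ (k+1)"
    using step.IH step.prems unfolding bigO_def by blast
  have hb: "cmod (h_fun (fst Q) w) \<le> D * cmod w ^ k" if wr: "cmod w < r" for w
  proof (cases "w = 0")
    case True then show ?thesis using h_0[OF E(1)] pm by (simp add: power_0_left)
  next
    case False
    then have "cmod (h_fun (fst Q) w) = cmod (eta_fun (fst Q) w) / cmod w" by (simp add: h_fun_def norm_divide)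
    also have "\<dots> \<le> D * cmod w ^ (k+1) / cmod w" using D(3)[OF wr] by (intro divide_right_mono) auto
    also have "\<dots> = D * cmod w ^ k" using False by simp
    finally show ?thesis .
  qed
  show ?case unfolding bigO_def
  proof (rule exI[of _ "10 * (D * 4^k)"], rule exI[of _ "min (1/4) (r/4)"], intro conjI allI impI)
    fix z :: complex assume z: "cmod z < min (1/4) (r/4)"
    define w where "w = eta_fun (snd P) z"
    have w: "cmod w \<le> 4 * cmod z" using eta_bounds(3)[OF E(4), of z] z by (simp add: w_def)
    then have wr: "cmod w < r" using z by linarith
    have "eta_fun (fst R) z = eta_fun (fst P) z * h_fun (fst Q) w" using E(8)[of z] z by (simp add: w_def)
    then have "cmod (eta_fun (fst R) z) = cmod (eta_fun (fst P) z) * cmod (h_fun (fst Q) w)" by (simp add: norm_mult)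
    also have "\<dots> \<le> (10 * cmod z ^ 2) * (D * (4 * cmod z) ^ k)"
    proof (intro mult_mono)
      show "cmod (eta_fun (fst P) z) \<le> 10 * cmod z ^ 2" using eta_bounds(4)[OF E(3), of z] z step.prems by simp
      show "cmod (h_fun (fst Q) w) \<le> D * (4 * cmod z) ^ k"
        using hb[OF wr] w D by (meson mult_left_mono norm_ge_zero order_trans power_mono)
    qed auto
    also have "\<dots> = (10 * (D * 4^k)) * cmod z ^ (Suc k + 1)" by (simp add: power_mult_distrib algebra_simps power2_eq_square)
    finally show "cmod (eta_fun (fst R) z) \<le> (10 * (D * 4^k)) * cmod z ^ (Suc k + 1)" .
  qed (use D in auto)
qed

lemma all_ord_psi:
  assumes M: "circle_prob M" and O: "\<And>N. bigO (eta_fun M) N"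
  shows "bigO (psi_fun M) N"
proof -
  obtain D r where D: "0 \<le> D" "0 < r" "\<And>z. cmod z < r \<Longrightarrow> cmod (eta_fun M z) \<le> D * cmod z ^ N"
    using O[of N] unfolding bigO_def by blast
  show ?thesis unfolding bigO_def
  proof (rule exI[of _ "2*D"], rule exI[of _ "min r (1/4)"], intro conjI allI impI)
    fix z :: complex assume z: "cmod z < min r (1/4)"
    have "cmod (psi_fun M z) \<le> 2 * cmod (eta_fun M z)" using eta_bounds(5)[OF M, of z] z by simp
    also have "\<dots> \<le> 2 * (D * cmod z ^ N)" using D(3)[of z] z by simp
    finally show "cmod (psi_fun M z) \<le> 2 * D * cmod z ^ N" by simp
  qed (use D in auto)
qed



lemma unif01: "uniform_measure lborel {0..(1::real)} = density lborel (\<lambda>x. ennreal (indicator {0..1} x))"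
  unfolding uniform_measure_def by (intro arg_cong[where f="density lborel"] ext) (auto simp: indicator_def)

lemma haar_meas: "(\<lambda>t::real. cis (2 * pi * t)) \<in> borel_measurable borel"
  by (intro borel_measurable_continuous_onI continuous_intros)

lemma haar_circle: "circle_prob haar_circle"
proof -
  have U: "prob_space (uniform_measure lborel {0..(1::real)})"
    by (rule prob_space_uniform_measure) auto
  have m: "(\<lambda>t::real. cis (2 * pi * t)) \<in> measurable (uniform_measure lborel {0..1}) borel"
    using haar_meas by simp
  have P: "prob_space haar_circle" unfolding haar_circle_def
    by (rule prob_space.prob_space_distr[OF U m])
  have S: "sets haar_circle = sets borel" unfolding haar_circle_def by simp
  have "emeasure haar_circle (sphere 0 1) = emeasure (uniform_measure lborel {0..(1::real)}) 
          ((\<lambda>t::real. cis (2 * pi * t)) -` sphere 0 1 \<inter> space (uniform_measure lborel {0..(1::real)}))"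
    unfolding haar_circle_def by (rule emeasure_distr[OF m]) simp
  also have "(\<lambda>t::real. cis (2 * pi * t)) -` sphere 0 1 \<inter> space (uniform_measure lborel {0..(1::real)})
       = space (uniform_measure lborel {0..(1::real)})" by auto
  also have "emeasure (uniform_measure lborel {0..(1::real)}) \<dots> = 1"
    using prob_space.emeasure_space_1[OF U] .
  finally show ?thesis using P S by (simp add: circle_prob_def)
qed

lemma haar_mom: assumes k: "k \<ge> 1" shows "mom haar_circle k = 0"
proof -
  have "mom haar_circle k = integral\<^sup>L (uniform_measure lborel {0..(1::real)}) (\<lambda>t. cis (2 * pi * t) ^ k)"
    unfolding mom_def haar_circle_def by (rule integral_distr) (use haar_meas in auto)
  also have "\<dots> = integral\<^sup>L lborel (\<lambda>t. indicator {0..1} t *\<^sub>R cis (2 * pi * t) ^ k)"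
    unfolding unif01 by (rule integral_density) (auto intro!: borel_measurable_continuous_onI continuous_intros)
  also have "\<dots> = integral\<^sup>L lborel (\<lambda>t. indicator {0..1} t *\<^sub>R cis (2 * pi * real k * t))"
    by (simp only: Complex.DeMoivre) (simp add: mult_ac)
  also have "\<dots> = (\<lambda>t. exp (\<i> * (2 * pi * real k) * complex_of_real t) / (\<i> * (2 * pi * real k))) 1
                - (\<lambda>t. exp (\<i> * (2 * pi * real k) * complex_of_real t) / (\<i> * (2 * pi * real k))) 0"
  proof (rule integral_FTC_atLeastAtMost)
    fix x :: real
    have "((\<lambda>z. exp (\<i> * (2 * pi * real k) * z) / (\<i> * (2 * pi * real k))) has_field_derivative
          cis (2 * pi * real k * x)) (at (complex_of_real x))"
      using k by (auto intro!: derivative_eq_intros simp: cis_conv_exp mult_ac)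
    then show "((\<lambda>t. exp (\<i> * (2 * pi * real k) * complex_of_real t) / (\<i> * (2 * pi * real k)))
           has_vector_derivative cis (2 * pi * real k * x)) (at x within {0..1})"
      by (rule has_vector_derivative_real_field)
  qed (auto intro!: continuous_intros)
  also have "\<dots> = 0"
  proof -
    have "exp (\<i> * (2 * pi * real k) * 1) = 1"
      using exp_integer_2pi[of "of_nat k"] by (simp add: mult_ac)
    then show ?thesis by simp
  qed
  finally show ?thesis .
qed



definition zm :: "complex measure \<Rightarrow> bool" where
  "zm M \<longleftrightarrow> circle_prob M \<and> (\<forall>k\<ge>1. mom M k = 0)"

lemma trig_mom:
  assumes Z: "zm M"
  shows "integral\<^sup>L M (\<lambda>z. z ^ j * cnj z ^ k) = (if j = k then 1 else 0)"
proof -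
  have M: "circle_prob M" using Z by (simp add: zm_def)
  have m: "\<And>n. n \<ge> 1 \<Longrightarrow> integral\<^sup>L M (\<lambda>z. z ^ n) = 0" using Z by (simp add: zm_def mom_def)
  have AE: "AE z in M. z ^ j * cnj z ^ k = (if k \<le> j then z ^ (j - k) else cnj (z ^ (k - j)))"
    using circ_AE[OF M]
  proof eventually_elim
    case (elim z)
    have zz: "z * cnj z = 1" using elim by (simp add: complex_mult_cnj cmod_def power2_eq_square)
    show ?case
    proof (cases "k \<le> j")
      case True
      then have "z ^ j * cnj z ^ k = z ^ (j - k) * (z * cnj z) ^ k"
        by (simp add: power_mult_distrib power_add[symmetric] mult.assoc)
      then show ?thesis using True zz by simp
    next
      case False
      then have "z ^ j * cnj z ^ k = cnj z ^ (k - j) * (z * cnj z) ^ j"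
        by (simp add: power_mult_distrib power_add[symmetric] mult_ac)
      then show ?thesis using False zz by (simp add: complex_cnj_power)
    qed
  qed
  have "integral\<^sup>L M (\<lambda>z. z ^ j * cnj z ^ k) = integral\<^sup>L M (\<lambda>z. if k \<le> j then z ^ (j - k) else cnj (z ^ (k - j)))"
  proof (rule integral_cong_AE)
    show "(\<lambda>z. z ^ j * cnj z ^ k) \<in> borel_measurable M"
      by (rule circ_meas[OF M], intro borel_measurable_continuous_onI continuous_intros)
    show "(\<lambda>z. if k \<le> j then z ^ (j - k) else cnj (z ^ (k - j))) \<in> borel_measurable M"
      by (rule circ_meas[OF M], cases "k \<le> j") (auto intro!: borel_measurable_continuous_onI continuous_intros)
  qed (rule AE)
  also have "\<dots> = (if j = k then 1 else 0)"
  proof (cases "k \<le> j")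
    case True
    then show ?thesis using m[of "j - k"] prob_space.prob_space[OF circ_prob[OF M]] by auto
  next
    case False
    then show ?thesis using m[of "k - j"] Bochner_Integration.integral_cnj[of M "\<lambda>z. z ^ (k - j)"] by auto
  qed
  finally show ?thesis .
qed

inductive_set lin :: "(complex \<Rightarrow> complex) set" where
  gen: "(\<lambda>z. c * z ^ j * cnj z ^ k) \<in> lin"
| add: "f \<in> lin \<Longrightarrow> g \<in> lin \<Longrightarrow> (\<lambda>z. f z + g z) \<in> lin"

lemma lin_cont: "f \<in> lin \<Longrightarrow> continuous_on UNIV f"
  by (induction rule: lin.induct) (auto intro!: continuous_intros)

lemma lin_meas: "f \<in> lin \<Longrightarrow> f \<in> borel_measurable borel"
  by (rule borel_measurable_continuous_onI[OF lin_cont])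

lemma cont_bounded_sphere:
  fixes f :: "complex \<Rightarrow> 'b::real_normed_vector"
  assumes "continuous_on UNIV f"
  obtains B where "\<And>z. cmod z = 1 \<Longrightarrow> norm (f z) \<le> B"
proof -
  have "compact (f ` sphere 0 1)"
    by (rule compact_continuous_image) (use assms continuous_on_subset in auto)
  then obtain B where "\<forall>x\<in>f ` sphere 0 1. norm x \<le> B"
    using compact_imp_bounded bounded_iff by metis
  then show ?thesis by (intro that) (auto simp: dist_norm)
qed

lemma cont_integrable:
  fixes f :: "complex \<Rightarrow> 'b::{banach,second_countable_topology}"
  assumes M: "circle_prob M" and f: "continuous_on UNIV f"
  shows "integrable M f"
proof -
  obtain B where B: "\<And>z. cmod z = 1 \<Longrightarrow> norm (f z) \<le> B" using cont_bounded_sphere[OF f] by blast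
  show ?thesis
    by (rule circ_integrable[OF M borel_measurable_continuous_onI[OF f], where B=B])
       (use circ_AE[OF M] B in \<open>auto elim: AE_mp\<close>)
qed

lemma lin_int:
  assumes Z1: "zm M1" and Z2: "zm M2" and f: "f \<in> lin"
  shows "integral\<^sup>L M1 f = integral\<^sup>L M2 f"
  using f
proof (induction rule: lin.induct)
  case (gen c j k)
  have "integral\<^sup>L M1 (\<lambda>z. c * z ^ j * cnj z ^ k) = c * integral\<^sup>L M1 (\<lambda>z. z ^ j * cnj z ^ k)"
    by (simp add: mult.assoc)
  also have "\<dots> = c * integral\<^sup>L M2 (\<lambda>z. z ^ j * cnj z ^ k)" using trig_mom[OF Z1] trig_mom[OF Z2] by simp
  also have "\<dots> = integral\<^sup>L M2 (\<lambda>z. c * z ^ j * cnj z ^ k)" by (simp add: mult.assoc)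
  finally show ?case .
next
  case (add f g)
  have M1: "circle_prob M1" and M2: "circle_prob M2" using Z1 Z2 by (auto simp: zm_def)
  have i: "integrable M f" "integrable M g" if "circle_prob M" for M
    using cont_integrable[OF that lin_cont[OF add.hyps(1)]] cont_integrable[OF that lin_cont[OF add.hyps(2)]] by auto
  show ?case using add.IH i[OF M1] i[OF M2] by simp
qed

lemma lin_scale: "f \<in> lin \<Longrightarrow> (\<lambda>z. a * f z) \<in> lin"
proof (induction rule: lin.induct)
  case (gen c j k)
  then show ?case using lin.gen[of "a*c" j k] by (simp add: mult.assoc)
next
  case (add f g)
  then show ?case using lin.add[OF add.IH] by (simp add: distrib_left)
qed

lemma lin_cnj: "f \<in> lin \<Longrightarrow> (\<lambda>z. cnj (f z)) \<in> lin"
proof (induction rule: lin.induct)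
  case (gen c j k)
  then show ?case using lin.gen[of "cnj c" k j] by (simp add: mult_ac complex_cnj_power)
next
  case (add f g)
  then show ?case using lin.add[OF add.IH] by simp
qed

lemma lin_mult_gen: "g \<in> lin \<Longrightarrow> (\<lambda>z. (c * z ^ j * cnj z ^ k) * g z) \<in> lin"
proof (induction rule: lin.induct)
  case (gen c' j' k')
  then show ?case using lin.gen[of "c*c'" "j+j'" "k+k'"] by (simp add: power_add mult_ac)
next
  case (add f g)
  then show ?case using lin.add[OF add.IH] by (simp add: distrib_left)
qed

lemma lin_mult: "f \<in> lin \<Longrightarrow> g \<in> lin \<Longrightarrow> (\<lambda>z. f z * g z) \<in> lin"
proof (induction rule: lin.induct)
  case (gen c j k)
  then show ?case by (rule lin_mult_gen)
next
  case (add f1 f2)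
  then show ?case using lin.add[OF add.IH] by (simp add: distrib_right)
qed

definition Rset :: "(complex \<Rightarrow> real) set" where
  "Rset = {g. (\<lambda>z. complex_of_real (g z)) \<in> lin}"

lemma Rset_ring: "function_ring_on Rset (sphere 0 1)"
proof
  show "compact (sphere (0::complex) 1)" by simp
next
  fix f assume "f \<in> Rset"
  have c: "continuous_on UNIV (\<lambda>z. complex_of_real (f z))"
    by (rule lin_cont) (use \<open>f \<in> Rset\<close> in \<open>simp add: Rset_def\<close>)
  have "continuous_on UNIV (\<lambda>z. Re (complex_of_real (f z)))" by (rule continuous_on_Re[OF c])
  then have "continuous_on UNIV f" by simp
  then show "continuous_on (sphere 0 1) f" by (rule continuous_on_subset) auto
next
  fix f g assume "f \<in> Rset" "g \<in> Rset"
  then show "(\<lambda>x. f x + g x) \<in> Rset" unfolding Rset_def using lin.add by fastforce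
next
  fix f g assume "f \<in> Rset" "g \<in> Rset"
  then show "(\<lambda>x. f x * g x) \<in> Rset" unfolding Rset_def using lin_mult by fastforce
next
  fix c :: real
  show "(\<lambda>_. c) \<in> Rset" unfolding Rset_def using lin.gen[of "complex_of_real c" 0 0] by simp
next
  fix x y :: complex assume "x \<noteq> y"
  have re: "(\<lambda>z. Re z) \<in> Rset"
  proof -
    have "(\<lambda>z. (1/2) * z ^ 1 * cnj z ^ 0 + (1/2) * z ^ 0 * cnj z ^ 1) \<in> lin"
      by (intro lin.add lin.gen)
    moreover have "(\<lambda>z. (1/2) * z ^ 1 * cnj z ^ 0 + (1/2) * z ^ 0 * cnj z ^ 1) = (\<lambda>z. complex_of_real (Re z))"
      by (auto simp: complex_eq_iff)
    ultimately show ?thesis unfolding Rset_def by simp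
  qed
  have im: "(\<lambda>z. Im z) \<in> Rset"
  proof -
    have "(\<lambda>z. (-\<i>/2) * z ^ 1 * cnj z ^ 0 + (\<i>/2) * z ^ 0 * cnj z ^ 1) \<in> lin"
      by (intro lin.add lin.gen)
    moreover have "(\<lambda>z. (-\<i>/2) * z ^ 1 * cnj z ^ 0 + (\<i>/2) * z ^ 0 * cnj z ^ 1) = (\<lambda>z. complex_of_real (Im z))"
      by (auto simp: complex_eq_iff)
    ultimately show ?thesis unfolding Rset_def by simp
  qed
  show "\<exists>f\<in>Rset. f x \<noteq> f y"
  proof (cases "Re x = Re y")
    case True
    then have "Im x \<noteq> Im y" using \<open>x \<noteq> y\<close> complex_eqI by blast
    then show ?thesis using im by blast
  next
    case False then show ?thesis using re by blast
  qed
qed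



lemma small_zero: fixes d :: real assumes "\<And>e. e > 0 \<Longrightarrow> \<bar>d\<bar> \<le> 2 * e" shows "d = 0"
proof (rule ccontr)
  assume "d \<noteq> 0"
  then have "\<bar>d\<bar> \<le> 2 * (\<bar>d\<bar>/4)" using assms[of "\<bar>d\<bar>/4"] by simp
  then show False using \<open>d \<noteq> 0\<close> by simp
qed

lemma approx_int:
  fixes f g :: "complex \<Rightarrow> real"
  assumes M: "circle_prob M" and f: "continuous_on UNIV f" and g: "continuous_on UNIV g"
    and e: "\<forall>x\<in>sphere 0 1. \<bar>f x - g x\<bar> < e"
  shows "\<bar>integral\<^sup>L M f - integral\<^sup>L M g\<bar> \<le> e"
proof -
  have "integral\<^sup>L M f - integral\<^sup>L M g = integral\<^sup>L M (\<lambda>x. f x - g x)"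
    using cont_integrable[OF M f] cont_integrable[OF M g] by simp
  also have "norm \<dots> \<le> e"
  proof (rule circ_norm_int[OF M])
    show "integrable M (\<lambda>x. f x - g x)" using cont_integrable[OF M f] cont_integrable[OF M g] by simp
    show "AE x in M. norm (f x - g x) \<le> e" using circ_AE[OF M]
      by eventually_elim (use e in \<open>auto simp: dist_norm less_imp_le\<close>)
  qed
  finally show ?thesis by simp
qed

lemma cont_eq:
  fixes f :: "complex \<Rightarrow> real"
  assumes Z1: "zm M1" and Z2: "zm M2" and f: "continuous_on UNIV f"
  shows "integral\<^sup>L M1 f = integral\<^sup>L M2 f"
proof -
  interpret function_ring_on Rset "sphere 0 1" by (rule Rset_ring)
  have M1: "circle_prob M1" and M2: "circle_prob M2" using Z1 Z2 by (auto simp: zm_def)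
  have "integral\<^sup>L M1 f - integral\<^sup>L M2 f = 0"
  proof (rule small_zero)
    fix e :: real assume e: "e > 0"
    have fs: "continuous_on (sphere 0 1) f" using f by (rule continuous_on_subset) auto
    obtain g where gR: "g \<in> Rset" and ge: "\<forall>x\<in>sphere 0 1. \<bar>f x - g x\<bar> < e"
      using Stone_Weierstrass_basic[OF fs e] by blast
    have gl: "(\<lambda>z. complex_of_real (g z)) \<in> lin" using gR by (simp add: Rset_def)
    have c: "continuous_on UNIV (\<lambda>z. complex_of_real (g z))" by (rule lin_cont[OF gl])
    have "continuous_on UNIV (\<lambda>z. Re (complex_of_real (g z)))" by (rule continuous_on_Re[OF c])
    then have gc: "continuous_on UNIV g" by simp
    have "complex_of_real (integral\<^sup>L M1 g) = complex_of_real (integral\<^sup>L M2 g)"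
      using lin_int[OF Z1 Z2 gl] by simp
    then have eqg: "integral\<^sup>L M1 g = integral\<^sup>L M2 g" by simp
    show "\<bar>integral\<^sup>L M1 f - integral\<^sup>L M2 f\<bar> \<le> 2 * e"
      using approx_int[OF M1 f gc ge] approx_int[OF M2 f gc ge] eqg by linarith
  qed
  then show ?thesis by simp
qed

lemma closed_lim:
  assumes M: "circle_prob M" and C: "closed C" "C \<noteq> {}"
  shows "(\<lambda>n. integral\<^sup>L M (\<lambda>x. max 0 (1 - real n * infdist x C))) \<longlonglongrightarrow> measure M C"
proof -
  interpret prob_space M using circ_prob[OF M] .
  have Cs: "C \<in> sets M" using circ_sets[OF M] C by (simp add: borel_closed)
  have sp: "space M = UNIV" using circ_sets[OF M] by (metis sets_eq_imp_space_eq space_borel)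
  have "(\<lambda>n. integral\<^sup>L M (\<lambda>x. max 0 (1 - real n * infdist x C))) \<longlonglongrightarrow> integral\<^sup>L M (indicator C)"
  proof (rule integral_dominated_convergence[where w="\<lambda>_. 1"])
    show "indicator C \<in> borel_measurable M" using Cs by simp
    show "(\<lambda>x. max 0 (1 - real n * infdist x C)) \<in> borel_measurable M" for n
      by (rule circ_meas[OF M], intro borel_measurable_continuous_onI continuous_intros)
    show "integrable M (\<lambda>_. 1::real)" by simp
    show "AE x in M. norm (max 0 (1 - real n * infdist x C)) \<le> 1" for n
      using infdist_nonneg[of _ C] by (auto intro!: AE_I2)
    show "AE x in M. (\<lambda>n. max 0 (1 - real n * infdist x C)) \<longlonglongrightarrow> indicator C x"
    proof (rule AE_I2)
      fix x
      show "(\<lambda>n. max 0 (1 - real n * infdist x C)) \<longlonglongrightarrow> indicator C x"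
      proof (cases "x \<in> C")
        case True then show ?thesis by simp
      next
        case False
        then have d: "infdist x C > 0" using in_closed_iff_infdist_zero[OF C] infdist_nonneg[of x C] by auto
        obtain N :: nat where N: "1 / infdist x C < real N" using reals_Archimedean2 by blast
        have "eventually (\<lambda>n. max 0 (1 - real n * infdist x C) = 0) sequentially"
          unfolding eventually_sequentially
        proof (intro exI allI impI)
          fix n assume "N \<le> n"
          then have "1 / infdist x C < real n" using N by linarith
          then have "1 < real n * infdist x C" using d by (simp add: field_simps)
          then show "max 0 (1 - real n * infdist x C) = 0" by simp
        qed
        then have "(\<lambda>n. max 0 (1 - real n * infdist x C)) \<longlonglongrightarrow> 0"
          by (rule tendsto_eventually)
        then show ?thesis using False by simp
      qed
    qed
  qed
  then show ?thesis using sp by simp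
qed

lemma closed_eq:
  assumes Z1: "zm M1" and Z2: "zm M2" and C: "closed C"
  shows "emeasure M1 C = emeasure M2 C"
proof (cases "C = {}")
  case True then show ?thesis by simp
next
  case False
  have M1: "circle_prob M1" and M2: "circle_prob M2" using Z1 Z2 by (auto simp: zm_def)
  have eq: "integral\<^sup>L M1 (\<lambda>x. max 0 (1 - real n * infdist x C)) = integral\<^sup>L M2 (\<lambda>x. max 0 (1 - real n * infdist x C))" for n
    by (rule cont_eq[OF Z1 Z2]) (intro continuous_intros)
  have "measure M1 C = measure M2 C"
    using closed_lim[OF M1 C False] closed_lim[OF M2 C False] unfolding eq by (rule LIMSEQ_unique)
  then show ?thesis
    using finite_measure.emeasure_eq_measure[OF prob_space.finite_measure[OF circ_prob[OF M1]]]
      finite_measure.emeasure_eq_measure[OF prob_space.finite_measure[OF circ_prob[OF M2]]] by simp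
qed

lemma zm_haar: "zm haar_circle"
  using haar_circle haar_mom by (simp add: zm_def)

lemma unique_haar:
  assumes Z: "zm M" shows "M = haar_circle"
proof -
  have M: "circle_prob M" using Z by (simp add: zm_def)
  have sb: "sets (borel :: complex measure) = sigma_sets UNIV (Collect closed)"
    unfolding borel_eq_closed by (rule sets_measure_of) simp
  show ?thesis
  proof (rule measure_eqI_generator_eq[where E="Collect closed" and \<Omega>=UNIV and A="\<lambda>_. UNIV"])
    show "Int_stable (Collect closed :: complex set set)" by (auto simp: Int_stable_def)
    show "Collect closed \<subseteq> Pow (UNIV :: complex set)" by simp
    show "emeasure M X = emeasure haar_circle X" if "X \<in> Collect closed" for X
      using closed_eq[OF Z zm_haar] that by simp
    show "sets M = sigma_sets UNIV (Collect closed)" using circ_sets[OF M] sb by simp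
    show "sets haar_circle = sigma_sets UNIV (Collect closed)" using circ_sets[OF haar_circle] sb by simp
    show "range (\<lambda>_. UNIV) \<subseteq> Collect (closed :: complex set \<Rightarrow> bool)" by simp
    show "(\<Union>i::nat. UNIV) = (UNIV :: complex set)" by simp
    show "emeasure M UNIV \<noteq> \<infinity>" for i :: nat
      using prob_space.finite_measure[OF circ_prob[OF M]] by (simp add: finite_measure.emeasure_finite)
  qed
qed



lemma final_part:
  assumes M: "circle_prob M" and O: "\<And>N. bigO (eta_fun M) N"
  shows "M = haar_circle"
proof -
  have "\<And>N. bigO (psi_fun M) N" by (rule all_ord_psi[OF M O])
  then have "\<forall>k\<ge>1. mom M k = 0" using moments_zero[OF M] by blast
  then show ?thesis using M unique_haar by (simp add: zm_def)
qed

theorem lemma5p2: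
  fixes \<mu> \<nu> :: "complex measure"
  assumes "cm_inf_div \<mu> \<nu>"
  shows "(integral\<^sup>L \<mu> (\<lambda>\<zeta>. \<zeta>) = 0 \<longrightarrow> \<mu> = haar_circle)
       \<and> (integral\<^sup>L \<nu> (\<lambda>\<zeta>. \<zeta>) = 0 \<longrightarrow> \<nu> = haar_circle)"
proof -
  have Mu: "circle_prob \<mu>" and Nu: "circle_prob \<nu>"
    and P: "\<And>n. n \<ge> 2 \<Longrightarrow> \<exists>Pn. cm_pow Pn n (\<mu>, \<nu>)"
    using assms unfolding cm_inf_div_def by blast+
  show ?thesis
  proof (intro conjI impI)
    assume "integral\<^sup>L \<mu> (\<lambda>\<zeta>. \<zeta>) = 0"
    then have m: "mom \<mu> 1 = 0" by (simp add: mom_def)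
    have "bigO (eta_fun \<mu>) N" for N
    proof -
      obtain Pn where Pn: "cm_pow Pn (N+2) (\<mu>, \<nu>)" using P[of "N+2"] by auto
      have "mom \<mu> 1 = mom (fst Pn) 1 ^ (N+2)" using pow_m1[OF Pn] by simp
      then have "mom (fst Pn) 1 ^ (N+2) = 0" using m by simp
      then have "mom (fst Pn) 1 = 0" using power_eq_0_iff by blast
      then have "bigO (eta_fun \<mu>) (N+2+1)" using pow_ord_fst[OF Pn] by simp
      then show ?thesis by (rule bigO_mono) simp
    qed
    then show "\<mu> = haar_circle" by (rule final_part[OF Mu])
  next
    assume "integral\<^sup>L \<nu> (\<lambda>\<zeta>. \<zeta>) = 0"
    then have m: "mom \<nu> 1 = 0" by (simp add: mom_def)
    have "bigO (eta_fun \<nu>) N" for N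
    proof -
      obtain Pn where Pn: "cm_pow Pn (N+2) (\<mu>, \<nu>)" using P[of "N+2"] by auto
      have "mom \<nu> 1 = mom (snd Pn) 1 ^ (N+2)" using pow_m1[OF Pn] by simp
      then have "mom (snd Pn) 1 ^ (N+2) = 0" using m by simp
      then have "mom (snd Pn) 1 = 0" using power_eq_0_iff by blast
      then have "bigO (eta_fun \<nu>) (N+2+1)" using pow_ord_snd[OF Pn] by simp
      then show ?thesis by (rule bigO_mono) simp
    qed
    then show "\<nu> = haar_circle" by (rule final_part[OF Nu])
  qed
qed

end
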